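(* Let $A$ be the Brauer graph algebra of a Brauer graph $G$, and let $C=c_n\cdots c_{l+1}c_l\cdots c_1$ be a string in $\overline{\mathrm{gr}(A)}$ with $l<n$, $s(c_1)=t(c_n)=i$, such that $c_l\cdots c_1$ or $c_1^{-1}\cdots c_l^{-1}$ lies in $\mathbb{P}$, where $i$ is the corresponding unbalanced edge with endpoints $v_S,v_L$. If $G_{i,S}\neq G_{i,L}$ and $G_{i,S}$ is a tree, then at least one of the following holds: (1) some vertex $v$ of $G_{i,S}$ has $m(v)\geq2$; (2) there are adjacent vertices $v,w$ of $G_{i,S}$ with $d_G(v,v_S)+1=d_G(w,v_S)$ and $\mathrm{grd}(v)<\mathrm{grd}(w)$. In other words, $G$ does not satisfy the $\star$-condition with respect to $i$.
   Context: $k$ algebraically closed. Brauer graph $G$: finite connected graph with multiplicity $m$ and cyclic orderings of edges at vertices. $A=kQ/I$: $Q_0=E(G)$; for each vertex $v$ with $m(v)\mathrm{val}(v)\ge2$ arrows along the cyclic ordering forming the special cycle $C_v$; $I$ generated by $C_v(\alpha)^{m(v)}-C_{v'}(\alpha')^{m(v')}$, $\alpha C_v(\alpha)^{m(v)}$, non-special compositions. $\mathrm{gr}(A)=\bigoplus\mathrm{rad}^nA/\mathrm{rad}^{n+1}A$. $\overline{\mathrm{gr}(A)}=\mathrm{gr}(A)/\bigoplus_{i\in L'}\mathrm{soc}(\mathrm{gr}(A)e_i)$, $L'$ the $i$ with $\mathrm{rad}(Ae_i)/\mathrm{soc}(Ae_i)=V_1\oplus V_2$, $V_1,V_2\ne0$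 of equal length; a string algebra. Strings: reduced words in arrows and inverse arrows avoiding relations. $\mathrm{grd}(v)=m(v)\mathrm{val}(v)$ if $>1$, else $m(v')\mathrm{val}(v')$ for the unique neighbour. An edge $i$ is unbalanced if its endpoints have different graded degrees, $v_S$ smaller, $v_L$ larger; $G_{i,S},G_{i,L}$ components of $G$ minus $i$ containing $v_S,v_L$. For unbalanced $i$, $r_i=C_{v_L}(\alpha)^{m(v_L)}$ where $C_{v_L}(\alpha)$ is the special $i$-cycle at $v_L$; $\mathbb{P}=\{r_i\}$. $d_G(u,v)$: number of edges of the walk from $u$ to $v$ in the tree. $\star$-condition w.r.t. $i$: $G_{i,S}\ne G_{i,L}$, $G_{i,S}$ a tree with all multiplicities $1$, and the walk from $v_S$ to any vertex of $G_{i,S}$ has weakly decreasing graded degrees. *)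

theory Defs
  imports Main
begin

text \<open>Each edge consists of exactly two
half-edges; the cyclic ordering of the edges around a vertex is a permutation
sig of the half-edges which preserves the vertex and acts transitively
(cyclically) on the half-edges at each vertex.  A loop contributes two
half-edges at its vertex.\<close>

record ('v,'e,'h) bgraph =
  V    :: "'v set"
  E    :: "'e set"
  H    :: "'h set"
  vtx  :: "'h \<Rightarrow> 'v"
  edg  :: "'h \<Rightarrow> 'e"
  sig  :: "'h \<Rightarrow> 'h"
  mult :: "'v \<Rightarrow> nat"

definition ends :: "('v,'e,'h) bgraph \<Rightarrow> 'e \<Rightarrow> 'v set" where
  "ends G e = {vtx G h | h. h \<in> H G \<and> edg G h = e}"

definition is_walk :: "('v,'e,'h) bgraph \<Rightarrow> 'e set \<Rightarrow> 'v list \<Rightarrow> 'e list \<Rightarrow> bool" where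
  "is_walk G E' vs es \<longleftrightarrow> length vs = length es + 1 \<and>
     (\<forall>k<length es. es!k \<in> E' \<and> ends G (es!k) = {vs!k, vs!(Suc k)})"

definition reach :: "('v,'e,'h) bgraph \<Rightarrow> 'e set \<Rightarrow> 'v \<Rightarrow> 'v \<Rightarrow> bool" where
  "reach G E' u w \<longleftrightarrow> (\<exists>vs es. is_walk G E' vs es \<and> hd vs = u \<and> last vs = w)"

definition connected_sub :: "('v,'e,'h) bgraph \<Rightarrow> 'v set \<Rightarrow> 'e set \<Rightarrow> bool" where
  "connected_sub G V' E' \<longleftrightarrow> (\<forall>u\<in>V'. \<forall>w\<in>V'. reach G E' u w)"

definition has_cycle :: "('v,'e,'h) bgraph \<Rightarrow> 'e set \<Rightarrow> bool" where
  "has_cycle G E' \<longleftrightarrow> (\<exists>vs es. is_walk G E' vs es \<and> es \<noteq> [] \<and> hd vs = last vs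
       \<and> distinct es \<and> distinct (tl vs))"

definition is_tree :: "('v,'e,'h) bgraph \<Rightarrow> 'v set \<Rightarrow> 'e set \<Rightarrow> bool" where
  "is_tree G V' E' \<longleftrightarrow> connected_sub G V' E' \<and> \<not> has_cycle G E'"

definition brauer_graph :: "('v,'e,'h) bgraph \<Rightarrow> bool" where
  "brauer_graph G \<longleftrightarrow>
     finite (V G) \<and> finite (E G) \<and> finite (H G) \<and> E G \<noteq> {} \<and>
     vtx G ` H G = V G \<and> edg G ` H G = E G \<and>
     (\<forall>e\<in>E G. card {h\<in>H G. edg G h = e} = 2) \<and>
     bij_betw (sig G) (H G) (H G) \<and>
     (\<forall>h\<in>H G. vtx G (sig G h) = vtx G h) \<and>
     (\<forall>h\<in>H G. \<forall>h'\<in>H G. vtx G h = vtx G h' \<longrightarrow> (\<exists>k. (sig G ^^ k) h = h')) \<and>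
     (\<forall>v\<in>V G. mult G v \<ge> 1) \<and>
     connected_sub G (V G) (E G)"

definition val :: "('v,'e,'h) bgraph \<Rightarrow> 'v \<Rightarrow> nat" where
  "val G v = card {h\<in>H G. vtx G h = v}"

definition Nv :: "('v,'e,'h) bgraph \<Rightarrow> 'v \<Rightarrow> nat" where
  "Nv G v = mult G v * val G v"

definition ohe :: "('v,'e,'h) bgraph \<Rightarrow> 'h \<Rightarrow> 'h" where
  "ohe G h = (THE h'. h' \<in> H G \<and> h' \<noteq> h \<and> edg G h' = edg G h)"

definition grd :: "('v,'e,'h) bgraph \<Rightarrow> 'v \<Rightarrow> nat" where
  "grd G v = (if Nv G v > 1 then Nv G v
              else Nv G (vtx G (ohe G (THE h. h \<in> H G \<and> vtx G h = v))))"

definition unbalanced :: "('v,'e,'h) bgraph \<Rightarrow> 'e \<Rightarrow> bool" where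
  "unbalanced G i \<longleftrightarrow> i \<in> E G \<and> (\<exists>a b. ends G i = {a, b} \<and> grd G a \<noteq> grd G b)"

definition vL_of :: "('v,'e,'h) bgraph \<Rightarrow> 'e \<Rightarrow> 'v" where
  "vL_of G i = (THE v. v \<in> ends G i \<and> (\<forall>u\<in>ends G i. grd G u \<le> grd G v))"

text \<open>Paths of the quiver are lists of arrows, first arrow first.  Arrows are the
half-edges h at non-truncated vertices (m val \<ge> 2); h is the arrow from
edge (edg h) to the next edge (edg (sig h)) in the cyclic ordering.
r_i = C_{v_L}(alpha)^{m(v_L)}: the special i-cycle at v_L, to the power m(v_L).\<close>
definition r_path :: "('v,'e,'h) bgraph \<Rightarrow> 'e \<Rightarrow> 'h list" where
  "r_path G i = (let v = vL_of G i; h = (THE h. h \<in> H G \<and> edg G h = i \<and> vtx G h = v)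
                 in map (\<lambda>k. (sig G ^^ k) h) [0..<Nv G v])"

definition Pset :: "('v,'e,'h) bgraph \<Rightarrow> 'h list set" where
  "Pset G = {r_path G i | i. unbalanced G i}"

definition is_arrow :: "('v,'e,'h) bgraph \<Rightarrow> 'h \<Rightarrow> bool" where
  "is_arrow G h \<longleftrightarrow> h \<in> H G \<and> Nv G (vtx G h) \<ge> 2"

text \<open>Nonzero paths of the monomial (string) algebra gr(A)-bar: special paths
h, sig h, sig^2 h, ... at a non-truncated vertex v, of length < m(v)val(v), or of
length m(v)val(v) (the socle path C_v^m at edge (edg h)) provided it survives
in gr(A)-bar, i.e. the other endpoint v' of that edge has m(v')val(v') <
m(v)val(v) (for equality the socle of gr(A)e lies in L' and is factored out,
and if it is larger the path lies in a deeper radical layer, hence is 0 in gr(A)).\<close>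
definition nonzero_path :: "('v,'e,'h) bgraph \<Rightarrow> 'h list \<Rightarrow> bool" where
  "nonzero_path G p \<longleftrightarrow> p \<noteq> [] \<and> (\<forall>h\<in>set p. is_arrow G h) \<and>
     (\<forall>k. Suc k < length p \<longrightarrow> p!(Suc k) = sig G (p!k)) \<and>
     (length p < Nv G (vtx G (hd p)) \<or>
      (length p = Nv G (vtx G (hd p)) \<and> Nv G (vtx G (ohe G (hd p))) < Nv G (vtx G (hd p))))"

datatype 'h letter = Dir 'h | Inv 'h

fun arr :: "'h letter \<Rightarrow> 'h" where
  "arr (Dir h) = h" | "arr (Inv h) = h"

fun is_dir :: "'h letter \<Rightarrow> bool" where
  "is_dir (Dir h) = True" | "is_dir (Inv h) = False"

fun lsrc :: "('v,'e,'h) bgraph \<Rightarrow> 'h letter \<Rightarrow> 'e" where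
  "lsrc G (Dir h) = edg G h" | "lsrc G (Inv h) = edg G (sig G h)"

fun ltgt :: "('v,'e,'h) bgraph \<Rightarrow> 'h letter \<Rightarrow> 'e" where
  "ltgt G (Dir h) = edg G (sig G h)" | "ltgt G (Inv h) = edg G h"

fun linv :: "'h letter \<Rightarrow> 'h letter" where
  "linv (Dir h) = Inv h" | "linv (Inv h) = Dir h"

text \<open>A (non-trivial) string C = c_n ... c_1 is represented by the list
[c_1, ..., c_n]: consecutive letters compose, the word is reduced, and no
subword of direct letters is a zero path and no subword of inverse letters
is the inverse of a zero path.\<close>
definition is_string :: "('v,'e,'h) bgraph \<Rightarrow> 'h letter list \<Rightarrow> bool" where
  "is_string G cs \<longleftrightarrow> cs \<noteq> [] \<and> (\<forall>c\<in>set cs. is_arrow G (arr c)) \<and>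
     (\<forall>k. Suc k < length cs \<longrightarrow> ltgt G (cs!k) = lsrc G (cs!Suc k)
          \<and> cs!Suc k \<noteq> linv (cs!k)) \<and>
     (\<forall>a b. a < b \<and> b \<le> length cs \<longrightarrow>
        ((\<forall>c\<in>set (take (b-a) (drop a cs)). is_dir c) \<longrightarrow>
            nonzero_path G (map arr (take (b-a) (drop a cs)))) \<and>
        ((\<forall>c\<in>set (take (b-a) (drop a cs)). \<not> is_dir c) \<longrightarrow>
            nonzero_path G (rev (map arr (take (b-a) (drop a cs))))))"

definition compV :: "('v,'e,'h) bgraph \<Rightarrow> 'e \<Rightarrow> 'v \<Rightarrow> 'v set" where
  "compV G i v = {u \<in> V G. reach G (E G - {i}) v u}"

definition compE :: "('v,'e,'h) bgraph \<Rightarrow> 'e \<Rightarrow> 'v \<Rightarrow> 'e set" where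
  "compE G i v = {e \<in> E G - {i}. ends G e \<subseteq> compV G i v}"

definition dist :: "('v,'e,'h) bgraph \<Rightarrow> 'v \<Rightarrow> 'v \<Rightarrow> nat" where
  "dist G u w = (LEAST n. \<exists>vs es. is_walk G (E G) vs es \<and> hd vs = u \<and> last vs = w
                          \<and> length es = n)"

end

theory Submission
  imports Defs
begin


lemma walk_ne: "is_walk G E' vs es \<Longrightarrow> vs \<noteq> []"
  unfolding is_walk_def by auto

lemma walk_Nil: "is_walk G E' vs [] \<longleftrightarrow> length vs = 1"
  unfolding is_walk_def by simp

lemma walk_Cons: "is_walk G E' (v # vs) (e # es) \<longleftrightarrow>
   vs \<noteq> [] \<and> e \<in> E' \<and> ends G e = {v, hd vs} \<and> is_walk G E' vs es"
proof
  assume w: "is_walk G E' (v # vs) (e # es)"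
  then have l: "length vs = length es + 1" unfolding is_walk_def by simp
  then have ne: "vs \<noteq> []" by auto
  have 0: "e \<in> E' \<and> ends G e = {v, vs!0}" using w unfolding is_walk_def by fastforce
  have "\<forall>k<length es. es!k \<in> E' \<and> ends G (es!k) = {vs!k, vs!(Suc k)}"
  proof (intro allI impI)
    fix k assume "k < length es"
    then have "Suc k < length (e # es)" by simp
    then show "es!k \<in> E' \<and> ends G (es!k) = {vs!k, vs!(Suc k)}" using w unfolding is_walk_def
      by (metis nth_Cons_Suc)
  qed
  then show "vs \<noteq> [] \<and> e \<in> E' \<and> ends G e = {v, hd vs} \<and> is_walk G E' vs es"
    using ne 0 l unfolding is_walk_def by (simp add: hd_conv_nth)
next
  assume a: "vs \<noteq> [] \<and> e \<in> E' \<and> ends G e = {v, hd vs} \<and> is_walk G E' vs es"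
  have len: "length (v # vs) = length (e # es) + 1" using a unfolding is_walk_def by simp
  show "is_walk G E' (v # vs) (e # es)" unfolding is_walk_def
  proof (rule conjI[OF len], intro allI impI)
    fix k assume k: "k < length (e # es)"
    show "(e # es) ! k \<in> E' \<and> ends G ((e # es) ! k) = {(v # vs) ! k, (v # vs) ! Suc k}"
    proof (cases k)
      case 0 then show ?thesis using a by (simp add: hd_conv_nth)
    next
      case (Suc j) then show ?thesis using a k unfolding is_walk_def by simp
    qed
  qed
qed

lemma walk_app: "is_walk G E' vs1 es1 \<Longrightarrow> is_walk G E' vs2 es2 \<Longrightarrow> last vs1 = hd vs2 \<Longrightarrow>
   is_walk G E' (vs1 @ tl vs2) (es1 @ es2) \<and> hd (vs1 @ tl vs2) = hd vs1 \<and> last (vs1 @ tl vs2) = last vs2"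
proof (induction es1 arbitrary: vs1)
  case Nil
  then obtain v where v: "vs1 = [v]" unfolding walk_Nil by (metis One_nat_def length_0_conv length_Suc_conv)
  have "vs2 \<noteq> []" using walk_ne[OF Nil(2)] .
  then have "[v] @ tl vs2 = vs2" using Nil(3) v by (cases vs2) auto
  then show ?case using v Nil by simp
next
  case (Cons e es1)
  obtain v vs1' where v: "vs1 = v # vs1'" using walk_ne[OF Cons(2)] by (cases vs1) auto
  have a: "vs1' \<noteq> [] \<and> e \<in> E' \<and> ends G e = {v, hd vs1'} \<and> is_walk G E' vs1' es1"
    using Cons(2) v walk_Cons by metis
  have l: "last vs1' = hd vs2" using Cons(4) v a by simp
  have IH: "is_walk G E' (vs1' @ tl vs2) (es1 @ es2) \<and> hd (vs1' @ tl vs2) = hd vs1' \<and> last (vs1' @ tl vs2) = last vs2"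
    using Cons.IH a Cons(3) l by blast
  have "vs1' @ tl vs2 \<noteq> []" using a by simp
  then have "is_walk G E' (v # (vs1' @ tl vs2)) (e # (es1 @ es2))"
    using IH a walk_Cons by metis
  then show ?case using v IH a by simp
qed

lemma walk_rev: "is_walk G E' vs es \<Longrightarrow> is_walk G E' (rev vs) (rev es)"
proof (induction es arbitrary: vs)
  case Nil then show ?case by (simp add: walk_Nil)
next
  case (Cons e es)
  obtain v vs' where v: "vs = v # vs'" using walk_ne[OF Cons(2)] by (cases vs) auto
  have a: "vs' \<noteq> [] \<and> e \<in> E' \<and> ends G e = {v, hd vs'} \<and> is_walk G E' vs' es"
    using Cons(2) v walk_Cons by metis
  have r: "is_walk G E' (rev vs') (rev es)" using Cons.IH a by blast
  have "is_walk G E' [v] []" by (simp add: walk_Nil)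
  then have "is_walk G E' [hd vs', v] [e]" using a walk_Cons[of G E' "hd vs'" "[v]" e "[]"]
    by (simp add: insert_commute)
  moreover have "last (rev vs') = hd [hd vs', v]" using a by (simp add: last_rev)
  ultimately have "is_walk G E' (rev vs' @ tl [hd vs', v]) (rev es @ [e])"
    using walk_app[OF r] by blast
  then show ?case using v by simp
qed

lemma walk_mono: "is_walk G E1 vs es \<Longrightarrow> E1 \<subseteq> E2 \<Longrightarrow> is_walk G E2 vs es"
  unfolding is_walk_def by blast

lemma reach_refl: "reach G E' u u"
  unfolding reach_def by (rule exI[of _ "[u]"], rule exI[of _ "[]"]) (simp add: walk_Nil)

lemma reach_trans: "reach G E' u v \<Longrightarrow> reach G E' v w \<Longrightarrow> reach G E' u w"
  unfolding reach_def by (metis walk_app)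

lemma reach_sym: "reach G E' u v \<Longrightarrow> reach G E' v u"
  unfolding reach_def by (metis walk_rev walk_ne hd_rev last_rev)

lemma reach_edge: "e \<in> E' \<Longrightarrow> ends G e = {v, w} \<Longrightarrow> reach G E' v w"
  unfolding reach_def
  by (rule exI[of _ "[v,w]"], rule exI[of _ "[e]"]) (simp add: walk_Cons walk_Nil)

locale bg =
  fixes G :: "('v,'e,'h) bgraph"
  assumes bg: "brauer_graph G"
begin

lemma finH: "finite (H G)" using bg unfolding brauer_graph_def by blast
lemma sigH: "h \<in> H G \<Longrightarrow> sig G h \<in> H G"
  using bg unfolding brauer_graph_def bij_betw_def by blast
lemma sig_vtx: "h \<in> H G \<Longrightarrow> vtx G (sig G h) = vtx G h"
  using bg unfolding brauer_graph_def by blast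
lemma sig_inj: "x \<in> H G \<Longrightarrow> y \<in> H G \<Longrightarrow> sig G x = sig G y \<Longrightarrow> x = y"
  using bg unfolding brauer_graph_def bij_betw_def inj_on_def by blast
lemma edgE: "h \<in> H G \<Longrightarrow> edg G h \<in> E G"
  using bg unfolding brauer_graph_def by blast
lemma vtxV: "h \<in> H G \<Longrightarrow> vtx G h \<in> V G"
  using bg unfolding brauer_graph_def by blast
lemma trans_sig: "h \<in> H G \<Longrightarrow> h' \<in> H G \<Longrightarrow> vtx G h = vtx G h' \<Longrightarrow> \<exists>k. (sig G ^^ k) h = h'"
  using bg unfolding brauer_graph_def by blast
lemma mult_pos: "v \<in> V G \<Longrightarrow> mult G v \<ge> 1"
  using bg unfolding brauer_graph_def by blast
lemma conn: "u \<in> V G \<Longrightarrow> w \<in> V G \<Longrightarrow> reach G (E G) u w"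
  using bg unfolding brauer_graph_def connected_sub_def by blast
lemma edg_surj: "e \<in> E G \<Longrightarrow> \<exists>h\<in>H G. edg G h = e"
proof -
  assume "e \<in> E G"
  moreover have "edg G ` H G = E G" using bg unfolding brauer_graph_def by blast
  ultimately show ?thesis by (metis imageE)
qed

lemma two: assumes h: "h \<in> H G" shows "\<exists>h'. {x\<in>H G. edg G x = edg G h} = {h, h'} \<and> h' \<noteq> h"
proof -
  have "card {x\<in>H G. edg G x = edg G h} = 2"
    using bg edgE[OF h] unfolding brauer_graph_def by blast
  then obtain a b where ab: "{x\<in>H G. edg G x = edg G h} = {a,b}" "a \<noteq> b"
    unfolding card_2_iff by blast
  have "h \<in> {a,b}" using h ab(1) by blast
  then have "h = a \<or> h = b" by simp
  then show ?thesis
  proof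
    assume "h = a" then show ?thesis using ab by blast
  next
    assume "h = b" then have "{a,b} = {h,a}" by (simp add: insert_commute)
    then show ?thesis using ab \<open>h = b\<close> by metis
  qed
qed

lemma ohe_prop: assumes h: "h \<in> H G"
  shows "ohe G h \<in> H G \<and> ohe G h \<noteq> h \<and> edg G (ohe G h) = edg G h"
proof -
  obtain h' where h': "{x\<in>H G. edg G x = edg G h} = {h, h'}" "h' \<noteq> h" using two[OF h] by blast
  have "\<exists>!x. x \<in> H G \<and> x \<noteq> h \<and> edg G x = edg G h"
  proof
    show "h' \<in> H G \<and> h' \<noteq> h \<and> edg G h' = edg G h" using h' by blast
    fix x assume "x \<in> H G \<and> x \<noteq> h \<and> edg G x = edg G h"
    then have "x \<in> {h,h'}" using h'(1) by blast
    then show "x = h'" using \<open>x \<in> H G \<and> x \<noteq> h \<and> edg G x = edg G h\<close> by blast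
  qed
  then show ?thesis unfolding ohe_def by (rule theI')
qed

lemma oheH: "h \<in> H G \<Longrightarrow> ohe G h \<in> H G" using ohe_prop by blast
lemma ohe_ne: "h \<in> H G \<Longrightarrow> ohe G h \<noteq> h" using ohe_prop by blast
lemma ohe_edg: "h \<in> H G \<Longrightarrow> edg G (ohe G h) = edg G h" using ohe_prop by blast

lemma ohe_cases: assumes "h \<in> H G" "h' \<in> H G" "edg G h' = edg G h"
  shows "h' = h \<or> h' = ohe G h"
proof -
  obtain x where x: "{y\<in>H G. edg G y = edg G h} = {h, x}" "x \<noteq> h" using two[OF assms(1)] by blast
  have "ohe G h \<in> {h,x}" using ohe_prop[OF assms(1)] x(1) by blast
  then have "ohe G h = x" using ohe_ne[OF assms(1)] by blast
  moreover have "h' \<in> {h,x}" using assms x(1) by blast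
  ultimately show ?thesis by blast
qed

lemma ohe_ohe: assumes h: "h \<in> H G" shows "ohe G (ohe G h) = h"
proof -
  have a: "ohe G h \<in> H G" using oheH[OF h] .
  have "ohe G (ohe G h) = h \<or> ohe G (ohe G h) = ohe G h"
    using ohe_cases[OF h oheH[OF a]] ohe_edg[OF a] ohe_edg[OF h] by simp
  then show ?thesis using ohe_ne[OF a] by blast
qed

lemma ends_edg: assumes h: "h \<in> H G" shows "ends G (edg G h) = {vtx G h, vtx G (ohe G h)}"
  unfolding ends_def
proof (intro set_eqI iffI)
  fix x assume "x \<in> {vtx G ha |ha. ha \<in> H G \<and> edg G ha = edg G h}"
  then obtain ha where "x = vtx G ha" "ha \<in> H G" "edg G ha = edg G h" by blast
  then show "x \<in> {vtx G h, vtx G (ohe G h)}" using ohe_cases[OF h] by blast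
next
  fix x assume "x \<in> {vtx G h, vtx G (ohe G h)}"
  then show "x \<in> {vtx G ha |ha. ha \<in> H G \<and> edg G ha = edg G h}" using h ohe_prop[OF h] by blast
qed

lemma ends_sub: "ends G e \<subseteq> V G"
  unfolding ends_def using vtxV by blast

lemma sigpow_H: "h \<in> H G \<Longrightarrow> (sig G ^^ k) h \<in> H G"
  by (induction k) (auto simp: sigH)
lemma sigpow_vtx: "h \<in> H G \<Longrightarrow> vtx G ((sig G ^^ k) h) = vtx G h"
  by (induction k) (auto simp: sig_vtx sigpow_H)
lemma sigpow_inj: assumes "x \<in> H G" "y \<in> H G" shows "(sig G ^^ k) x = (sig G ^^ k) y \<Longrightarrow> x = y"
proof (induction k)
  case 0 thus ?case by simp
next
  case (Suc k)
  have "(sig G ^^ k) x = (sig G ^^ k) y"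
    using Suc.prems sig_inj[OF sigpow_H[OF assms(1)] sigpow_H[OF assms(2)]] by simp
  thus ?case using Suc.IH by blast
qed

lemma sigpow_mod: assumes "(sig G ^^ len) s = s"
  shows "(sig G ^^ k) s = (sig G ^^ (k mod len)) s"
proof -
  have q: "(sig G ^^ (len * q)) s = s" for q
    by (induction q) (auto simp: funpow_add assms)
  have "k = k mod len + len * (k div len)" by simp
  then have "(sig G ^^ k) s = (sig G ^^ (k mod len)) ((sig G ^^ (len * (k div len))) s)"
    by (metis funpow_add o_apply)
  then show ?thesis using q by simp
qed

lemma orbit_le: assumes s: "s \<in> H G" and len: "len \<ge> 1" and p: "(sig G ^^ len) s = s"
  shows "val G (vtx G s) \<le> len"
proof -
  have "{h\<in>H G. vtx G h = vtx G s} \<subseteq> (\<lambda>j. (sig G ^^ j) s) ` {..<len}"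
  proof
    fix h assume "h \<in> {h\<in>H G. vtx G h = vtx G s}"
    then obtain k where "(sig G ^^ k) s = h" using trans_sig[OF s] by fastforce
    then have "(sig G ^^ (k mod len)) s = h" using sigpow_mod[OF p] by simp
    moreover have "k mod len < len" using len by simp
    ultimately show "h \<in> (\<lambda>j. (sig G ^^ j) s) ` {..<len}" by blast
  qed
  then have "card {h\<in>H G. vtx G h = vtx G s} \<le> card ((\<lambda>j. (sig G ^^ j) s) ` {..<len})"
    by (intro card_mono) auto
  also have "\<dots> \<le> len" using card_image_le[of "{..<len}"] by simp
  finally show ?thesis unfolding val_def .
qed

lemma val_pos: "s \<in> H G \<Longrightarrow> val G (vtx G s) \<ge> 1"
  unfolding val_def using finH
  by (metis (mono_tags, lifting) One_nat_def Suc_leI card_gt_0_iff empty_iff finite_subset mem_Collect_eq subsetI)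

lemma period: assumes s: "s \<in> H G" shows "(sig G ^^ val G (vtx G s)) s = s"
proof -
  let ?O = "{h\<in>H G. vtx G h = vtx G s}"
  let ?f = "\<lambda>j. (sig G ^^ j) s"
  have fin: "finite ?O" using finH by simp
  have sub: "?f ` {..val G (vtx G s)} \<subseteq> ?O" using sigpow_H[OF s] sigpow_vtx[OF s] by blast
  have "\<not> inj_on ?f {..val G (vtx G s)}"
  proof
    assume "inj_on ?f {..val G (vtx G s)}"
    then have "card {..val G (vtx G s)} \<le> card ?O" using card_inj_on_le[OF _ sub fin] by blast
    then show False unfolding val_def by simp
  qed
  then obtain a b where ab: "a \<le> val G (vtx G s)" "b \<le> val G (vtx G s)" "a \<noteq> b" "?f a = ?f b"
    unfolding inj_on_def by blast
  have "\<exists>a b. a < b \<and> b \<le> val G (vtx G s) \<and> ?f a = ?f b"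
    using ab by (metis linorder_neqE_nat)
  then obtain a b where ab: "a < b" "b \<le> val G (vtx G s)" "?f a = ?f b" by blast
  have "?f b = (sig G ^^ a) ((sig G ^^ (b - a)) s)"
    using ab(1) by (metis funpow_add le_add_diff_inverse less_imp_le o_apply)
  then have eq: "(sig G ^^ (b - a)) s = s"
    using sigpow_inj[OF _ s, of "(sig G ^^ (b - a)) s" a] sigpow_H[OF s] ab(3) by simp
  have "val G (vtx G s) \<le> b - a" using orbit_le[OF s _ eq] ab(1) by simp
  then have "b - a = val G (vtx G s)" using ab by simp
  then show ?thesis using eq by simp
qed

end

locale stp = bg +
  fixes i :: 'e and vS vL :: 'v
  assumes iE: "i \<in> E G" and ends_i: "ends G i = {vS, vL}" and SL: "vS \<noteq> vL"
    and bridge: "(compV G i vS, compE G i vS) \<noteq> (compV G i vL, compE G i vL)"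
    and tree: "is_tree G (compV G i vS) (compE G i vS)"
begin

abbreviation "CV \<equiv> compV G i vS"
abbreviation "CE \<equiv> compE G i vS"
abbreviation "dd u \<equiv> dist G u vS"

lemma vS_V: "vS \<in> V G" using ends_i ends_sub by blast
lemma vL_V: "vL \<in> V G" using ends_i ends_sub by blast
lemma vS_CV: "vS \<in> CV" unfolding compV_def using vS_V reach_refl[of G "E G - {i}" vS] by blast
lemma CV_V: "x \<in> CV \<Longrightarrow> x \<in> V G" unfolding compV_def by blast

lemma vL_notin: "vL \<notin> CV"
proof
  assume "vL \<in> CV"
  then have r: "reach G (E G - {i}) vS vL" unfolding compV_def by blast
  have "reach G (E G - {i}) vS u \<longleftrightarrow> reach G (E G - {i}) vL u" for u
    using reach_trans[OF reach_sym[OF r], of u] reach_trans[OF r, of u] by blast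
  then have eq: "compV G i vS = compV G i vL" unfolding compV_def by simp
  then have "compE G i vS = compE G i vL" unfolding compE_def by simp
  then show False using bridge eq by simp
qed

lemma CE_E: "e \<in> CE \<Longrightarrow> e \<in> E G \<and> e \<noteq> i \<and> ends G e \<subseteq> CV" unfolding compE_def by blast

lemma comp_step: assumes "x \<in> CV" "e \<in> E G" "e \<noteq> i" "ends G e = {x,y}" shows "y \<in> CV \<and> e \<in> CE"
proof -
  have "reach G (E G - {i}) vS x" using assms(1) unfolding compV_def by blast
  moreover have "reach G (E G - {i}) x y" using reach_edge[of e "E G - {i}" G x y] assms by blast
  ultimately have "reach G (E G - {i}) vS y" by (rule reach_trans)
  moreover have "y \<in> V G" using assms(4) ends_sub by blast
  ultimately have y: "y \<in> CV" unfolding compV_def by blast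
  have "ends G e \<subseteq> CV" using assms(1,4) y by simp
  then have "e \<in> CE" unfolding compE_def using assms(2,3) by blast
  then show ?thesis using y by blast
qed

lemma nocycle: "\<not> has_cycle G CE" using tree unfolding is_tree_def by blast

lemma noloop: assumes "e \<in> CE" "ends G e = {x, y}" shows "x \<noteq> y"
proof
  assume xy: "x = y"
  have "is_walk G CE [x] []" by (simp add: walk_Nil)
  then have "is_walk G CE [x,x] [e]" using assms xy by (simp add: walk_Cons)
  then have "has_cycle G CE" unfolding has_cycle_def
    by (rule_tac x="[x,x]" in exI, rule_tac x="[e]" in exI) simp
  then show False using nocycle by blast
qed

lemma dist_ex: assumes "u \<in> V G"
  shows "\<exists>vs es. is_walk G (E G) vs es \<and> hd vs = u \<and> last vs = vS \<and> length es = dd u"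
proof -
  have "\<exists>n vs es. is_walk G (E G) vs es \<and> hd vs = u \<and> last vs = vS \<and> length es = n"
    using conn[OF assms vS_V] unfolding reach_def by blast
  then show ?thesis unfolding dist_def
    by (rule LeastI_ex[where P = "\<lambda>n. \<exists>vs es. is_walk G (E G) vs es \<and> hd vs = u \<and> last vs = vS \<and> length es = n"])
qed

lemma dist_le: "is_walk G (E G) vs es \<Longrightarrow> hd vs = u \<Longrightarrow> last vs = vS \<Longrightarrow> dd u \<le> length es"
  unfolding dist_def by (rule Least_le) blast

lemma dist_self: "dd vS = 0"
proof -
  have "is_walk G (E G) [vS] []" by (simp add: walk_Nil)
  then have "dd vS \<le> 0" using dist_le[of "[vS]" "[]" vS] by simp
  then show ?thesis by simp
qed

lemma dist0: assumes "u \<in> V G" "dd u = 0" shows "u = vS"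
proof -
  obtain vs es where w: "is_walk G (E G) vs es" "hd vs = u" "last vs = vS" "length es = dd u"
    using dist_ex[OF assms(1)] by blast
  then have "es = []" using assms(2) by simp
  then have "length vs = 1" using w(1) walk_Nil by metis
  then obtain x where "vs = [x]" by (metis One_nat_def length_0_conv length_Suc_conv)
  then show ?thesis using w by simp
qed

lemma dist_adj: assumes "e \<in> E G" "ends G e = {a,b}" "b \<in> V G" shows "dd a \<le> dd b + 1"
proof -
  obtain vs es where w: "is_walk G (E G) vs es" "hd vs = b" "last vs = vS" "length es = dd b"
    using dist_ex[OF assms(3)] by blast
  have ne: "vs \<noteq> []" using walk_ne[OF w(1)] .
  then have "is_walk G (E G) (a # vs) (e # es)" using w assms walk_Cons by metis
  moreover have "last (a # vs) = vS" using ne w by simp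
  ultimately have "dd a \<le> length (e # es)" using dist_le[of "a # vs" "e # es" a] by simp
  then show ?thesis using w by simp
qed

lemma parent: assumes u: "u \<in> CV" "u \<noteq> vS"
  shows "\<exists>e a. e \<in> CE \<and> ends G e = {a,u} \<and> a \<in> CV \<and> dd a + 1 = dd u"
proof -
  obtain vs es where w: "is_walk G (E G) vs es" "hd vs = u" "last vs = vS" "length es = dd u"
    using dist_ex[OF CV_V[OF u(1)]] by blast
  have "es \<noteq> []"
  proof
    assume "es = []"
    then have "length vs = 1" using w(1) walk_Nil by metis
    then obtain x where "vs = [x]" by (metis One_nat_def length_0_conv length_Suc_conv)
    then show False using w u by simp
  qed
  then obtain e es' where es: "es = e # es'" by (cases es) auto
  obtain v vs' where vs: "vs = v # vs'" using walk_ne[OF w(1)] by (cases vs) auto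
  have v: "v = u" using w vs by simp
  have c: "vs' \<noteq> [] \<and> e \<in> E G \<and> ends G e = {u, hd vs'} \<and> is_walk G (E G) vs' es'"
    using w(1) es vs v walk_Cons by metis
  define a where "a = hd vs'"
  have "last vs' = vS" using w(3) vs c by simp
  then have "dd a \<le> length es'" using dist_le c a_def by blast
  then have d1: "dd a + 1 \<le> dd u" using w(4) es by simp
  have aV: "a \<in> V G" using c a_def ends_sub by blast
  have "ends G e = {a, u}" using c a_def by (simp add: insert_commute)
  then have d2: "dd u \<le> dd a + 1" using dist_adj c aV by blast
  have "e \<noteq> i"
  proof
    assume "e = i"
    then have "{u, a} = {vS, vL}" using c a_def ends_i by simp
    then have "u = vL" using u(2) by (metis doubleton_eq_iff)
    then show False using u(1) vL_notin by simp
  qed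
  then have "a \<in> CV \<and> e \<in> CE" using comp_step[OF u(1)] c a_def by blast
  then show ?thesis using d1 d2 \<open>ends G e = {a, u}\<close> by (intro exI[of _ e] exI[of _ a]) simp
qed

definition Qinv :: "'v list \<Rightarrow> 'e list \<Rightarrow> bool" where
  "Qinv Qvs Qes \<longleftrightarrow> is_walk G CE Qvs Qes \<and> distinct Qvs \<and> distinct Qes \<and> 2 \<le> length Qes \<and>
     set Qvs \<subseteq> CV \<and> (\<forall>v\<in>set Qvs. v \<noteq> hd Qvs \<longrightarrow> v \<noteq> last Qvs \<longrightarrow> dd (hd Qvs) \<le> dd v \<and> dd (last Qvs) \<le> dd v)"

lemma Qinv_rev: assumes Q: "Qinv Qvs Qes" shows "Qinv (rev Qvs) (rev Qes)"
proof -
  have w: "is_walk G CE Qvs Qes" and dv: "distinct Qvs" and de: "distinct Qes" and l2: "2 \<le> length Qes"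
    and sub: "set Qvs \<subseteq> CV"
    and dc: "\<forall>v\<in>set Qvs. v \<noteq> hd Qvs \<longrightarrow> v \<noteq> last Qvs \<longrightarrow> dd (hd Qvs) \<le> dd v \<and> dd (last Qvs) \<le> dd v"
    using Q unfolding Qinv_def by auto
  have ne: "Qvs \<noteq> []" using walk_ne[OF w] .
  have h: "hd (rev Qvs) = last Qvs" "last (rev Qvs) = hd Qvs" using ne by (auto simp: hd_rev last_rev)
  show ?thesis unfolding Qinv_def h set_rev distinct_rev length_rev
    using walk_rev[OF w] dv de l2 sub dc by blast
qed

lemma walk_edge_ends: assumes "is_walk G E' vs es" "e \<in> set es"
  shows "\<exists>k. Suc k < length vs \<and> ends G e = {vs!k, vs!Suc k}"
proof -
  obtain k where k: "k < length es" "e = es!k" using assms(2) by (metis in_set_conv_nth)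
  then show ?thesis using assms(1) unfolding is_walk_def by auto
qed

lemma Qstep: assumes Q: "Qinv Qvs Qes" and le: "dd (last Qvs) \<le> dd (hd Qvs)"
  shows "has_cycle G CE \<or> (\<exists>Qvs' Qes'. Qinv Qvs' Qes' \<and> dd (hd Qvs') + dd (last Qvs') < dd (hd Qvs) + dd (last Qvs))"
proof -
  let ?u1 = "hd Qvs" and ?u2 = "last Qvs"
  have w: "is_walk G CE Qvs Qes" and dv: "distinct Qvs" and de: "distinct Qes" and l2: "2 \<le> length Qes"
    and sub: "set Qvs \<subseteq> CV"
    and dc: "\<forall>v\<in>set Qvs. v \<noteq> ?u1 \<longrightarrow> v \<noteq> ?u2 \<longrightarrow> dd ?u1 \<le> dd v \<and> dd ?u2 \<le> dd v"
    using Q unfolding Qinv_def by auto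
  have lv: "length Qvs = length Qes + 1" using w unfolding is_walk_def by simp
  obtain u1 rest where qv: "Qvs = u1 # rest" using lv by (cases Qvs) auto
  have rne: "rest \<noteq> []" using lv l2 qv by auto
  have u1: "?u1 = u1" using qv by simp
  have u2: "?u2 = last rest" using qv rne by simp
  have "last rest \<in> set rest" using rne by simp
  moreover have "u1 \<notin> set rest" using dv qv by simp
  ultimately have neq: "u1 \<noteq> last rest" by blast
  have u1CV: "u1 \<in> CV" using sub qv by simp
  have u2CV: "last rest \<in> CV" using sub qv \<open>last rest \<in> set rest\<close> by auto
  have "u1 \<noteq> vS"
  proof
    assume "u1 = vS"
    then have "dd (last rest) = 0" using le u1 u2 dist_self by simp
    then have "last rest = vS" using dist0 CV_V[OF u2CV] by blast
    then show False using neq \<open>u1 = vS\<close> by simp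
  qed
  then obtain e a where ea: "e \<in> CE" "ends G e = {a,u1}" "a \<in> CV" "dd a + 1 = dd u1"
    using parent[OF u1CV] by blast
  have "ends G e = {a, hd Qvs}" using ea u1 by simp
  then have nw: "is_walk G CE (a # Qvs) (e # Qes)" using walk_Cons[of G CE a Qvs e Qes] w ea(1) qv by simp
  show ?thesis
  proof (cases "a = last rest")
    case True
    have "e \<notin> set Qes"
    proof
      assume "e \<in> set Qes"
      then obtain k where k: "k < length Qes" "e = Qes!k" by (metis in_set_conv_nth)
      have ek: "ends G e = {Qvs!k, Qvs!Suc k}" using w k unfolding is_walk_def by simp
      have "last Qvs = Qvs ! (length Qes)" using last_conv_nth[of Qvs] qv lv by simp
      then have L: "Qvs ! (length Qes) = last rest" using u2 by simp
      have Z: "Qvs ! 0 = u1" using qv by simp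
      have "{Qvs!k, Qvs!Suc k} = {Qvs!0, Qvs!(length Qes)}" using ek ea(2) True L Z by (simp add: insert_commute)
      then have o1: "Qvs!Suc k = Qvs!0 \<or> Qvs!Suc k = Qvs!(length Qes)" by blast
      have lq: "Suc k < length Qvs" "0 < length Qvs" "length Qes < length Qvs" "k < length Qvs" using k lv by auto
      have "Suc k = 0 \<or> Suc k = length Qes"
        using o1 nth_eq_iff_index_eq[OF dv lq(1) lq(2)] nth_eq_iff_index_eq[OF dv lq(1) lq(3)] by blast
      then have sk: "Suc k = length Qes" by simp
      have "Qvs!k = Qvs!0 \<or> Qvs!k = Qvs!(length Qes)"
        using \<open>{Qvs!k, Qvs!Suc k} = {Qvs!0, Qvs!(length Qes)}\<close> by blast
      then have "k = 0 \<or> k = length Qes"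
        using nth_eq_iff_index_eq[OF dv lq(4) lq(2)] nth_eq_iff_index_eq[OF dv lq(4) lq(3)] by blast
      then show False using sk l2 k by auto
    qed
    then have "distinct (e # Qes)" using de by simp
    moreover have "hd (a # Qvs) = last (a # Qvs)" using True u2 qv by simp
    moreover have "distinct (tl (a # Qvs))" using dv by simp
    ultimately have "has_cycle G CE" unfolding has_cycle_def using nw
      by (rule_tac x="a # Qvs" in exI, rule_tac x="e # Qes" in exI) simp
    then show ?thesis by blast
  next
    case False
    have da: "dd a < dd u1" using ea by simp
    have anot: "a \<notin> set Qvs"
    proof
      assume as: "a \<in> set Qvs"
      have "a \<noteq> u1" using da by auto
      then have "a \<noteq> hd Qvs" "a \<noteq> last Qvs" using u1 u2 False by simp_all
      then have "dd (hd Qvs) \<le> dd a" using dc as by blast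
      then show False using da u1 by simp
    qed
    have enot: "e \<notin> set Qes"
    proof
      assume "e \<in> set Qes"
      then obtain k where k: "Suc k < length Qvs" "ends G e = {Qvs!k, Qvs!Suc k}" using walk_edge_ends[OF w] by blast
      have "a \<in> ends G e" using ea(2) by simp
      then have "a \<in> {Qvs!k, Qvs!Suc k}" using k(2) by simp
      then have "a = Qvs!k \<or> a = Qvs!Suc k" by simp
      moreover have "Qvs!k \<in> set Qvs" using k(1) by (intro nth_mem) simp
      moreover have "Qvs!Suc k \<in> set Qvs" using k(1) by (intro nth_mem) simp
      ultimately have "a \<in> set Qvs" by blast
      then show False using anot by simp
    qed
    have "Qinv (a # Qvs) (e # Qes)" unfolding Qinv_def
    proof (intro conjI)
      show "is_walk G CE (a # Qvs) (e # Qes)" using nw .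
      show "distinct (a # Qvs)" using anot dv by simp
      show "distinct (e # Qes)" using enot de by simp
      show "2 \<le> length (e # Qes)" using l2 by simp
      show "set (a # Qvs) \<subseteq> CV" using sub ea by simp
      show "\<forall>v\<in>set (a # Qvs). v \<noteq> hd (a # Qvs) \<longrightarrow> v \<noteq> last (a # Qvs) \<longrightarrow>
          dd (hd (a # Qvs)) \<le> dd v \<and> dd (last (a # Qvs)) \<le> dd v"
      proof (intro ballI impI)
        fix v assume v: "v \<in> set (a # Qvs)" "v \<noteq> hd (a # Qvs)" "v \<noteq> last (a # Qvs)"
        have vq: "v \<in> set Qvs" "v \<noteq> last rest" using v qv rne by auto
        show "dd (hd (a # Qvs)) \<le> dd v \<and> dd (last (a # Qvs)) \<le> dd v"
        proof (cases "v = u1")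
          case True then show ?thesis using da le u1 u2 qv rne by simp
        next
          case F: False
          then have "v \<noteq> hd Qvs" "v \<noteq> last Qvs" using vq u1 u2 by simp_all
          then have "dd (hd Qvs) \<le> dd v \<and> dd (last Qvs) \<le> dd v" using dc vq by blast
          then have "dd u1 \<le> dd v \<and> dd (last rest) \<le> dd v" using u1 u2 by simp
          then show ?thesis using da qv rne by simp
        qed
      qed
    qed
    moreover have "dd (hd (a # Qvs)) + dd (last (a # Qvs)) < dd (hd Qvs) + dd (last Qvs)"
      using da u1 u2 qv rne by simp
    ultimately show ?thesis by blast
  qed
qed

lemma Qcycle: "Qinv Qvs Qes \<Longrightarrow> has_cycle G CE"
proof (induction "dd (hd Qvs) + dd (last Qvs)" arbitrary: Qvs Qes rule: less_induct)
  case less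
  show ?case
  proof (cases "dd (last Qvs) \<le> dd (hd Qvs)")
    case True
    then show ?thesis using Qstep[OF less.prems] less.hyps by blast
  next
    case False
    have Q': "Qinv (rev Qvs) (rev Qes)" using Qinv_rev[OF less.prems] .
    have ne: "Qvs \<noteq> []" using less.prems walk_ne unfolding Qinv_def by blast
    have "dd (last (rev Qvs)) \<le> dd (hd (rev Qvs))" using False ne by (simp add: hd_rev last_rev)
    then have "has_cycle G CE \<or> (\<exists>Qvs' Qes'. Qinv Qvs' Qes' \<and> dd (hd Qvs') + dd (last Qvs') < dd (hd (rev Qvs)) + dd (last (rev Qvs)))"
      using Qstep[OF Q'] by blast
    moreover have "dd (hd (rev Qvs)) + dd (last (rev Qvs)) = dd (hd Qvs) + dd (last Qvs)"
      using ne by (simp add: hd_rev last_rev)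
    ultimately show ?thesis using less.hyps by auto
  qed
qed

lemma tree_unique: assumes w: "w \<in> CV" and e1: "e1 \<in> CE" "ends G e1 = {w, z1}"
  and e2: "e2 \<in> CE" "ends G e2 = {w, z2}" and d1: "dd z1 \<le> dd w" and d2: "dd z2 \<le> dd w"
  shows "e1 = e2"
proof (rule ccontr)
  assume ne: "e1 \<noteq> e2"
  have z1w: "z1 \<noteq> w" using noloop[OF e1] by simp
  have z2w: "z2 \<noteq> w" using noloop[OF e2] by simp
  have z1C: "z1 \<in> CV" using CE_E[OF e1(1)] e1(2) by blast
  have z2C: "z2 \<in> CV" using CE_E[OF e2(1)] e2(2) by blast
  have w0: "is_walk G CE [z2] []" by (simp add: walk_Nil)
  then have w1: "is_walk G CE [w, z2] [e2]" using e2 by (simp add: walk_Cons)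
  then have w2: "is_walk G CE [z1, w, z2] [e1, e2]" using e1 by (simp add: walk_Cons insert_commute)
  show False
  proof (cases "z1 = z2")
    case True
    have "is_walk G CE [w, z1, w] [e1, e2]" using w2 True e1 e2
      by (simp add: walk_Cons walk_Nil insert_commute)
    then have "has_cycle G CE" unfolding has_cycle_def using ne z1w
      by (rule_tac x="[w, z1, w]" in exI, rule_tac x="[e1, e2]" in exI) simp
    then show False using nocycle by blast
  next
    case False
    have "Qinv [z1, w, z2] [e1, e2]" unfolding Qinv_def
      using w2 ne z1w z2w False w z1C z2C d1 d2 by auto
    then show False using Qcycle nocycle by blast
  qed
qed

end


fun shh :: "('v,'e,'h) bgraph \<Rightarrow> 'h letter \<Rightarrow> 'h" where
  "shh G (Dir h) = h" | "shh G (Inv h) = sig G h"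
fun thh :: "('v,'e,'h) bgraph \<Rightarrow> 'h letter \<Rightarrow> 'h" where
  "thh G (Dir h) = sig G h" | "thh G (Inv h) = h"

lemma lsrc_sh: "lsrc G c = edg G (shh G c)" by (cases c) auto
lemma ltgt_th: "ltgt G c = edg G (thh G c)" by (cases c) auto

context bg
begin
lemma sh_H: "arr c \<in> H G \<Longrightarrow> shh G c \<in> H G" by (cases c) (auto simp: sigH)
lemma th_H: "arr c \<in> H G \<Longrightarrow> thh G c \<in> H G" by (cases c) (auto simp: sigH)
lemma sh_vtx: "arr c \<in> H G \<Longrightarrow> vtx G (shh G c) = vtx G (arr c)" by (cases c) (auto simp: sig_vtx)
lemma th_vtx: "arr c \<in> H G \<Longrightarrow> vtx G (thh G c) = vtx G (arr c)" by (cases c) (auto simp: sig_vtx)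

lemma period_mult: assumes "s \<in> H G" shows "(sig G ^^ (q * val G (vtx G s))) s = s"
proof (induction q)
  case 0 then show ?case by simp
next
  case (Suc q)
  have "(sig G ^^ (Suc q * val G (vtx G s))) s = (sig G ^^ (val G (vtx G s))) ((sig G ^^ (q * val G (vtx G s))) s)"
    by (simp add: funpow_add)
  then show ?case using Suc period[OF assms] by simp
qed
end

lemma dir_cases: "is_dir c \<Longrightarrow> c = Dir (arr c)" by (cases c) auto
lemma inv_cases: "\<not> is_dir c \<Longrightarrow> c = Inv (arr c)" by (cases c) auto

locale strg = stp +
  fixes cs
  assumes string: "is_string G cs"
begin

abbreviation "n \<equiv> length cs"

lemma str_arrow: "k < n \<Longrightarrow> is_arrow G (arr (cs!k))"
  using string unfolding is_string_def by auto

lemma str_H: "k < n \<Longrightarrow> arr (cs!k) \<in> H G"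
  using str_arrow unfolding is_arrow_def by blast

lemma str_link: "Suc k < n \<Longrightarrow> ltgt G (cs!k) = lsrc G (cs!Suc k) \<and> cs!Suc k \<noteq> linv (cs!k)"
  using string unfolding is_string_def by blast

lemma seg_nth: "k < n \<Longrightarrow> a \<le> k \<Longrightarrow> t < Suc k - a \<Longrightarrow> take (Suc k - a) (drop a cs) ! t = cs ! (a + t)"
  by simp

lemma seg_len: "k < n \<Longrightarrow> a \<le> k \<Longrightarrow> length (take (Suc k - a) (drop a cs)) = Suc k - a"
  by simp

definition run :: "nat \<Rightarrow> nat \<Rightarrow> bool" where
  "run a k \<longleftrightarrow> a \<le> k \<and> k < n \<and> (\<forall>j. a \<le> j \<and> j \<le> k \<longrightarrow> is_dir (cs!j) = is_dir (cs!a))"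

lemma run_dir: "run a k \<Longrightarrow> a \<le> j \<Longrightarrow> j \<le> k \<Longrightarrow> is_dir (cs!j) = is_dir (cs!a)"
  unfolding run_def by (elim conjE allE[of _ j]) simp

lemma seg_set: assumes "k < n" "a \<le> k" "x \<in> set (take (Suc k - a) (drop a cs))"
  shows "\<exists>j. a \<le> j \<and> j \<le> k \<and> x = cs!j"
proof -
  obtain t where t: "t < length (take (Suc k - a) (drop a cs))" "x = take (Suc k - a) (drop a cs) ! t"
    using assms(3) by (metis in_set_conv_nth)
  then have "t < Suc k - a" using seg_len[OF assms(1,2)] by simp
  then show ?thesis using t seg_nth[OF assms(1,2)] by (intro exI[of _ "a + t"]) auto
qed

lemma seg_nz: assumes r: "run a k"
  shows "(is_dir (cs!a) \<longrightarrow> nonzero_path G (map arr (take (Suc k - a) (drop a cs)))) \<and>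
         (\<not> is_dir (cs!a) \<longrightarrow> nonzero_path G (rev (map arr (take (Suc k - a) (drop a cs)))))"
proof -
  have ak: "a \<le> k" "k < n" using r unfolding run_def by auto
  have dirs: "\<forall>j. a \<le> j \<and> j \<le> k \<longrightarrow> is_dir (cs!j) = is_dir (cs!a)" using r unfolding run_def by blast
  have ab: "a < Suc k \<and> Suc k \<le> n" using ak by simp
  have S: "((\<forall>c\<in>set (take (Suc k - a) (drop a cs)). is_dir c) \<longrightarrow>
            nonzero_path G (map arr (take (Suc k - a) (drop a cs)))) \<and>
        ((\<forall>c\<in>set (take (Suc k - a) (drop a cs)). \<not> is_dir c) \<longrightarrow>
            nonzero_path G (rev (map arr (take (Suc k - a) (drop a cs)))))"
    using string ab unfolding is_string_def by blast
  have all: "\<forall>c\<in>set (take (Suc k - a) (drop a cs)). is_dir c = is_dir (cs!a)"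
  proof
    fix x assume "x \<in> set (take (Suc k - a) (drop a cs))"
    then obtain j where "a \<le> j" "j \<le> k" "x = cs!j" using seg_set[OF ak(2,1)] by blast
    then show "is_dir x = is_dir (cs!a)" using dirs by blast
  qed
  show ?thesis using S all by auto
qed

lemma two_seg: assumes "Suc k < n"
  shows "take (Suc (Suc k) - k) (drop k cs) = [cs!k, cs!Suc k]"
proof -
  have "drop k cs = cs!k # cs!Suc k # drop (Suc (Suc k)) cs"
    using assms by (metis Cons_nth_drop_Suc Suc_lessD)
  then show ?thesis by simp
qed

lemma same_dir: assumes k: "Suc k < n" and d: "is_dir (cs!k) = is_dir (cs!Suc k)"
  shows "shh G (cs!Suc k) = thh G (cs!k)"
proof -
  have r: "run k (Suc k)" unfolding run_def using k d by (auto simp: le_Suc_eq)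
  note nz = seg_nz[OF r]
  note ts = two_seg[OF k]
  show ?thesis
  proof (cases "is_dir (cs!k)")
    case True
    then have "nonzero_path G [arr (cs!k), arr (cs!Suc k)]" using nz ts by simp
    then have "arr (cs!Suc k) = sig G (arr (cs!k))" unfolding nonzero_path_def
      by (metis One_nat_def Suc_less_eq length_Cons list.size(3) nth_Cons_0 nth_Cons_Suc zero_less_Suc)
    moreover have "cs!k = Dir (arr (cs!k))" "cs!Suc k = Dir (arr (cs!Suc k))"
      using True d dir_cases by metis+
    ultimately show ?thesis by (metis shh.simps(1) thh.simps(1))
  next
    case False
    then have "nonzero_path G [arr (cs!Suc k), arr (cs!k)]" using nz ts by simp
    then have "arr (cs!k) = sig G (arr (cs!Suc k))" unfolding nonzero_path_def
      by (metis One_nat_def Suc_less_eq length_Cons list.size(3) nth_Cons_0 nth_Cons_Suc zero_less_Suc)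
    moreover have "cs!k = Inv (arr (cs!k))" "cs!Suc k = Inv (arr (cs!Suc k))"
      using False d inv_cases by metis+
    ultimately show ?thesis by (metis shh.simps(2) thh.simps(2))
  qed
qed

lemma diff_dir: assumes k: "Suc k < n" and d: "is_dir (cs!k) \<noteq> is_dir (cs!Suc k)"
  shows "shh G (cs!Suc k) = ohe G (thh G (cs!k))"
proof -
  have H1: "thh G (cs!k) \<in> H G" using th_H str_H k by simp
  have H2: "shh G (cs!Suc k) \<in> H G" using sh_H str_H k by simp
  have l: "ltgt G (cs!k) = lsrc G (cs!Suc k)" "cs!Suc k \<noteq> linv (cs!k)" using str_link[OF k] by auto
  have e: "edg G (shh G (cs!Suc k)) = edg G (thh G (cs!k))" using l(1) by (simp add: lsrc_sh ltgt_th)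
  have "shh G (cs!Suc k) \<noteq> thh G (cs!k)"
  proof
    assume eq: "shh G (cs!Suc k) = thh G (cs!k)"
    show False
    proof (cases "is_dir (cs!k)")
      case True
      then have c1: "cs!k = Dir (arr (cs!k))" "cs!Suc k = Inv (arr (cs!Suc k))"
        using d dir_cases inv_cases by metis+
      then have "sig G (arr (cs!Suc k)) = sig G (arr (cs!k))" using eq by (metis shh.simps(2) thh.simps(1))
      then have "arr (cs!Suc k) = arr (cs!k)" using sig_inj str_H k by (meson Suc_lessD)
      then have "cs!Suc k = linv (cs!k)" using c1 by (metis linv.simps(1))
      then show False using l(2) by simp
    next
      case False
      then have c1: "cs!k = Inv (arr (cs!k))" "cs!Suc k = Dir (arr (cs!Suc k))"
        using d dir_cases inv_cases by metis+
      then have "arr (cs!Suc k) = arr (cs!k)" using eq by (metis shh.simps(1) thh.simps(2))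
      then have "cs!Suc k = linv (cs!k)" using c1 by (metis linv.simps(2))
      then show False using l(2) by simp
    qed
  qed
  then show ?thesis using ohe_cases[OF H1 H2 e] by blast
qed

lemma run_pow: assumes "a + d < n" "\<forall>j. a \<le> j \<and> j \<le> a + d \<longrightarrow> is_dir (cs!j) = D"
  shows "(D \<longrightarrow> thh G (cs!(a+d)) = (sig G ^^ Suc d) (shh G (cs!a))) \<and>
         (\<not> D \<longrightarrow> (sig G ^^ Suc d) (thh G (cs!(a+d))) = shh G (cs!a))"
  using assms
proof (induction d)
  case 0
  have Da: "is_dir (cs!a) = D" using 0(2) by simp
  show ?case
  proof (cases D)
    case True
    then have "cs!a = Dir (arr (cs!a))" using dir_cases Da by metis
    then have "thh G (cs!a) = sig G (shh G (cs!a))" by (metis shh.simps(1) thh.simps(1))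
    then show ?thesis using True by simp
  next
    case False
    then have "cs!a = Inv (arr (cs!a))" using inv_cases Da by metis
    then have "sig G (thh G (cs!a)) = shh G (cs!a)" by (metis shh.simps(2) thh.simps(2))
    then show ?thesis using False by simp
  qed
next
  case (Suc d)
  have lt: "Suc (a + d) < n" using Suc.prems by simp
  have IH: "(D \<longrightarrow> thh G (cs!(a+d)) = (sig G ^^ Suc d) (shh G (cs!a))) \<and>
         (\<not> D \<longrightarrow> (sig G ^^ Suc d) (thh G (cs!(a+d))) = shh G (cs!a))"
    using Suc.IH Suc.prems by simp
  have dd1: "is_dir (cs!(a+d)) = D" "is_dir (cs!Suc (a+d)) = D"
    using Suc.prems(2) by simp_all
  have sd: "shh G (cs!Suc (a+d)) = thh G (cs!(a+d))" using same_dir[OF lt] dd1 by simp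
  show ?case
  proof (cases D)
    case True
    then have "cs!Suc (a+d) = Dir (arr (cs!Suc (a+d)))" using dd1 dir_cases by metis
    then have "thh G (cs!Suc (a+d)) = sig G (shh G (cs!Suc (a+d)))" by (metis shh.simps(1) thh.simps(1))
    then have "thh G (cs!(a + Suc d)) = sig G ((sig G ^^ Suc d) (shh G (cs!a)))" using sd IH True by simp
    then show ?thesis using True by simp
  next
    case False
    then have "cs!Suc (a+d) = Inv (arr (cs!Suc (a+d)))" using dd1 inv_cases by metis
    then have "sig G (thh G (cs!Suc (a+d))) = shh G (cs!Suc (a+d))" by (metis shh.simps(2) thh.simps(2))
    then have "(sig G ^^ Suc (Suc d)) (thh G (cs!(a + Suc d))) = (sig G ^^ Suc d) (thh G (cs!(a+d)))"
      using sd by (simp add: funpow_Suc_right del: funpow.simps)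
    then show ?thesis using IH False by simp
  qed
qed

lemma run_props: assumes r: "run a k"
  shows "vtx G (thh G (cs!k)) = vtx G (shh G (cs!a))"
    and "thh G (cs!k) = shh G (cs!a) \<Longrightarrow> (sig G ^^ (Suc k - a)) (shh G (cs!a)) = shh G (cs!a)"
proof -
  have ak: "a \<le> k" "k < n" using r unfolding run_def by auto
  obtain d where d: "k = a + d" using ak le_Suc_ex by blast
  have P: "(is_dir (cs!a) \<longrightarrow> thh G (cs!(a+d)) = (sig G ^^ Suc d) (shh G (cs!a))) \<and>
         (\<not> is_dir (cs!a) \<longrightarrow> (sig G ^^ Suc d) (thh G (cs!(a+d))) = shh G (cs!a))"
  proof -
    have "\<forall>j. a \<le> j \<and> j \<le> a + d \<longrightarrow> is_dir (cs!j) = is_dir (cs!a)" using run_dir[OF r] d by blast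
    then show ?thesis using run_pow[of a d "is_dir (cs!a)"] ak d by blast
  qed
  have sH: "shh G (cs!a) \<in> H G" using sh_H str_H ak by simp
  have tH: "thh G (cs!k) \<in> H G" using th_H str_H ak by simp
  have sk: "Suc k - a = Suc d" using d by simp
  show "vtx G (thh G (cs!k)) = vtx G (shh G (cs!a))"
  proof (cases "is_dir (cs!a)")
    case True then have "thh G (cs!k) = (sig G ^^ Suc d) (shh G (cs!a))" using P d by blast
    then show ?thesis using sigpow_vtx[OF sH, of "Suc d"] by (simp only:)
  next
    case False then have "(sig G ^^ Suc d) (thh G (cs!k)) = shh G (cs!a)" using P d by blast
    then show ?thesis using sigpow_vtx[OF tH, of "Suc d"] by (simp only:)
  qed
  show "thh G (cs!k) = shh G (cs!a) \<Longrightarrow> (sig G ^^ (Suc k - a)) (shh G (cs!a)) = shh G (cs!a)"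
    using P d sk by (cases "is_dir (cs!a)") auto
qed

lemma run_nz: assumes r: "run a k"
  shows "Suc k - a < Nv G (vtx G (shh G (cs!a))) \<or>
    (Suc k - a = Nv G (vtx G (shh G (cs!a))) \<and>
     Nv G (vtx G (ohe G (if is_dir (cs!a) then shh G (cs!a) else thh G (cs!k)))) < Nv G (vtx G (shh G (cs!a))))"
proof -
  have ak: "a \<le> k" "k < n" using r unfolding run_def by auto
  let ?seg = "take (Suc k - a) (drop a cs)"
  have len: "length ?seg = Suc k - a" using seg_len[OF ak(2,1)] .
  have h0: "?seg ! 0 = cs!a" using seg_nth[OF ak(2,1), of 0] ak by simp
  have hl: "?seg ! (k - a) = cs!k" using seg_nth[OF ak(2,1), of "k - a"] ak by simp
  have ne: "?seg \<noteq> []" using len ak by auto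
  have hdseg: "hd (map arr ?seg) = arr (cs!a)" using ne h0 by (simp add: hd_map hd_conv_nth)
  have "last (map arr ?seg) = map arr ?seg ! (length ?seg - 1)" using ne by (simp add: last_conv_nth)
  also have "\<dots> = arr (?seg ! (k - a))" using len ak by simp
  finally have lastseg: "last (map arr ?seg) = arr (cs!k)" using hl by simp
  have sH: "arr (cs!a) \<in> H G" using str_H ak by simp
  have kH: "arr (cs!k) \<in> H G" using str_H ak by simp
  show ?thesis
  proof (cases "is_dir (cs!a)")
    case True
    then have nz: "nonzero_path G (map arr ?seg)" using seg_nz[OF r] by blast
    have "shh G (cs!a) = arr (cs!a)" using True dir_cases by (metis shh.simps(1))
    then show ?thesis using nz len hdseg True unfolding nonzero_path_def by simp
  next
    case False
    then have nz: "nonzero_path G (rev (map arr ?seg))" using seg_nz[OF r] by blast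
    have dk: "\<not> is_dir (cs!k)" using run_dir[OF r, of k] ak False by simp
    have "thh G (cs!k) = arr (cs!k)" using dk inv_cases by (metis thh.simps(2))
    moreover have "vtx G (thh G (cs!k)) = vtx G (shh G (cs!a))" using run_props(1)[OF r] .
    moreover have "hd (rev (map arr ?seg)) = arr (cs!k)" using lastseg by (simp add: hd_rev)
    ultimately show ?thesis using nz len False unfolding nonzero_path_def by simp
  qed
qed

end


context bg
begin

lemma vL_of_eq: assumes "ends G j = {a,b}" "grd G a < grd G b" shows "vL_of G j = b"
  unfolding vL_of_def
proof (rule the_equality)
  show "b \<in> ends G j \<and> (\<forall>u\<in>ends G j. grd G u \<le> grd G b)" using assms by auto
next
  fix v assume v: "v \<in> ends G j \<and> (\<forall>u\<in>ends G j. grd G u \<le> grd G v)"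
  then have "v = a \<or> v = b" using assms(1) by simp
  moreover have "grd G b \<le> grd G v" using v assms(1) by simp
  ultimately show "v = b" using assms(2) by auto
qed

lemma unb: assumes "unbalanced G j" shows "\<exists>a b. ends G j = {a,b} \<and> a \<noteq> b \<and> vL_of G j = b"
proof -
  obtain a b where ab: "ends G j = {a,b}" "grd G a \<noteq> grd G b" using assms unfolding unbalanced_def by blast
  show ?thesis
  proof (cases "grd G a < grd G b")
    case True then show ?thesis using ab vL_of_eq[OF ab(1)] by (intro exI[of _ a] exI[of _ b]) auto
  next
    case False
    then have "grd G b < grd G a" using ab(2) by simp
    moreover have "ends G j = {b,a}" using ab(1) by (simp add: insert_commute)
    ultimately show ?thesis using ab vL_of_eq by (intro exI[of _ b] exI[of _ a]) auto
  qed
qed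

lemma he_THE: assumes ab: "ends G j = {a,b}" "a \<noteq> b"
  shows "(THE h. h \<in> H G \<and> edg G h = j \<and> vtx G h = b) \<in> H G \<and>
    edg G (THE h. h \<in> H G \<and> edg G h = j \<and> vtx G h = b) = j \<and>
    vtx G (THE h. h \<in> H G \<and> edg G h = j \<and> vtx G h = b) = b \<and>
    vtx G (ohe G (THE h. h \<in> H G \<and> edg G h = j \<and> vtx G h = b)) = a"
proof -
  have "b \<in> ends G j" using ab by simp
  then obtain h where h: "h \<in> H G" "edg G h = j" "vtx G h = b" unfolding ends_def by blast
  have "ends G j = {b, vtx G (ohe G h)}" using ends_edg[OF h(1)] h by simp
  then have oa: "vtx G (ohe G h) = a" using ab by (metis doubleton_eq_iff)
  have "\<exists>!h. h \<in> H G \<and> edg G h = j \<and> vtx G h = b"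
  proof
    show "h \<in> H G \<and> edg G h = j \<and> vtx G h = b" using h by blast
    fix h' assume h': "h' \<in> H G \<and> edg G h' = j \<and> vtx G h' = b"
    then have "h' = h \<or> h' = ohe G h" using ohe_cases[OF h(1)] h by simp
    then show "h' = h" using h' oa ab(2) by auto
  qed
  then have T: "(THE h. h \<in> H G \<and> edg G h = j \<and> vtx G h = b) = h"
    using h by (simp add: the1_equality)
  show ?thesis unfolding T using h oa by simp
qed

lemma grd_big: "2 \<le> Nv G v \<Longrightarrow> grd G v = Nv G v" unfolding grd_def by simp

end

locale mc = strg +
  fixes l :: nat
  assumes ln: "l < length cs"
    and src: "lsrc G (hd cs) = i" and tgt: "ltgt G (last cs) = i"
    and P: "(\<exists>p\<in>Pset G. take l cs = map Dir p) \<or> (\<exists>p\<in>Pset G. take l cs = map Inv (rev p))"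
    and grdSL: "grd G vS < grd G vL"
    and NC1: "\<And>v. v \<in> CV \<Longrightarrow> mult G v < 2"
    and NC2: "\<And>v w e. v \<in> CV \<Longrightarrow> w \<in> CV \<Longrightarrow> e \<in> CE \<Longrightarrow> ends G e = {v,w} \<Longrightarrow>
                 dd v + 1 = dd w \<Longrightarrow> grd G v < grd G w \<Longrightarrow> False"
begin

lemma Nv_CV: "x \<in> CV \<Longrightarrow> Nv G x = val G x"
  using NC1[of x] mult_pos[OF CV_V, of x] unfolding Nv_def by simp

lemma init: "\<exists>h0 D. h0 \<in> H G \<and> edg G h0 = i \<and> vtx G h0 = vL \<and> vtx G (ohe G h0) = vS \<and> l = Nv G vL \<and>
   (\<forall>t<l. cs!t = (if D then Dir ((sig G ^^ t) h0) else Inv ((sig G ^^ (l - 1 - t)) h0)))"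
proof -
  obtain p D where p: "p \<in> Pset G" and pD: "(D \<and> take l cs = map Dir p) \<or> (\<not> D \<and> take l cs = map Inv (rev p))"
    using P by blast
  obtain j where j: "unbalanced G j" "p = r_path G j" using p unfolding Pset_def by blast
  obtain a b where ab: "ends G j = {a,b}" "a \<noteq> b" "vL_of G j = b" using unb[OF j(1)] by blast
  define hj where "hj = (THE h. h \<in> H G \<and> edg G h = j \<and> vtx G h = b)"
  have hj: "hj \<in> H G" "edg G hj = j" "vtx G hj = b" "vtx G (ohe G hj) = a"
    using he_THE[OF ab(1,2)] unfolding hj_def by auto
  define N where "N = Nv G b"
  have pe: "p = map (\<lambda>k. (sig G ^^ k) hj) [0..<N]"
    using j(2) ab(3) unfolding r_path_def Let_def hj_def N_def by simp
  have lN: "l = N"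
  proof -
    have "length (take l cs) = l" using ln by simp
    moreover have "length (take l cs) = length p" using pD by (metis length_map length_rev)
    ultimately show ?thesis using pe by simp
  qed
  have bV: "b \<in> V G" using ab(1) ends_sub by blast
  have N1: "N \<ge> 1" unfolding N_def Nv_def using mult_pos[OF bV] val_pos[OF hj(1)] hj(3)
    by (metis One_nat_def Suc_le_eq mult_pos_pos)
  have perN: "(sig G ^^ N) hj = hj" unfolding N_def Nv_def using period_mult[OF hj(1), of "mult G b"] hj(3) by simp
  have cst: "\<forall>t<l. cs!t = (if D then Dir ((sig G ^^ t) hj) else Inv ((sig G ^^ (l - 1 - t)) hj))"
  proof (intro allI impI)
    fix t assume t: "t < l"
    have ct: "cs!t = take l cs ! t" using t by simp
    show "cs!t = (if D then Dir ((sig G ^^ t) hj) else Inv ((sig G ^^ (l - 1 - t)) hj))"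
    proof (cases D)
      case True
      then have "cs!t = map Dir p ! t" using pD ct by auto
      then show ?thesis using True t lN pe by simp
    next
      case False
      then have "cs!t = map Inv (rev p) ! t" using pD ct by auto
      also have "\<dots> = Inv (rev p ! t)" using t lN pe by simp
      also have "rev p ! t = p ! (N - 1 - t)" using t lN pe by (simp add: rev_nth)
      also have "\<dots> = (sig G ^^ (N - 1 - t)) hj" using t lN pe by simp
      finally show ?thesis using False lN by simp
    qed
  qed
  have l0: "0 < l" using N1 lN by simp
  have "cs \<noteq> []" using ln by auto
  then have "hd cs = cs!0" by (simp add: hd_conv_nth)
  then have "lsrc G (cs!0) = i" using src by simp
  then have "edg G hj = i"
  proof (cases D)
    case True
    then show ?thesis using cst l0 \<open>lsrc G (cs!0) = i\<close> by simp
  next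
    case False
    then have "cs!0 = Inv ((sig G ^^ (N - 1)) hj)" using cst l0 lN by simp
    then have "lsrc G (cs!0) = edg G (sig G ((sig G ^^ (N - 1)) hj))" by simp
    also have "sig G ((sig G ^^ (N - 1)) hj) = (sig G ^^ N) hj" using N1
      by (metis Suc_diff_1 funpow.simps(2) o_apply less_le_trans zero_less_one)
    finally show ?thesis using perN \<open>lsrc G (cs!0) = i\<close> by simp
  qed
  then have ji: "j = i" using hj by simp
  have "vL_of G i = vL" using vL_of_eq[OF ends_i grdSL] .
  then have bL: "b = vL" using ab(3) ji by simp
  have "a = vS" using ab(1,2) ji ends_i bL by (metis doubleton_eq_iff)
  then show ?thesis using hj ji bL lN N_def cst by (intro exI[of _ hj] exI[of _ D]) simp
qed

end


locale mc2 = mc +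
  fixes h0 and D :: bool
  assumes h0H: "h0 \<in> H G" and h0e: "edg G h0 = i" and h0v: "vtx G h0 = vL"
    and h0o: "vtx G (ohe G h0) = vS" and lNv: "l = Nv G vL"
    and cst: "\<And>t. t < l \<Longrightarrow> cs!t = (if D then Dir ((sig G ^^ t) h0) else Inv ((sig G ^^ (l - 1 - t)) h0))"
begin

lemma vLV: "vL \<in> V G" using vL_V .

lemma l1: "1 \<le> l"
  unfolding lNv Nv_def using mult_pos[OF vLV] val_pos[OF h0H] h0v
  by (metis One_nat_def Suc_le_eq mult_pos_pos)

lemma perl: "(sig G ^^ l) h0 = h0"
  unfolding lNv Nv_def using period_mult[OF h0H, of "mult G vL"] h0v by simp

lemma K1: "t < l \<Longrightarrow> is_dir (cs!t) = D"
  using cst[of t] by (cases D) auto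

lemma Kth: "thh G (cs!(l-1)) = h0"
proof (cases D)
  case True
  then have "cs!(l-1) = Dir ((sig G ^^ (l-1)) h0)" using cst[of "l-1"] l1 by simp
  then have "thh G (cs!(l-1)) = sig G ((sig G ^^ (l-1)) h0)" by simp
  also have "\<dots> = (sig G ^^ l) h0" using l1
    by (metis Suc_diff_1 funpow.simps(2) o_apply less_le_trans zero_less_one)
  finally show ?thesis using perl by simp
next
  case False
  then have "cs!(l-1) = Inv ((sig G ^^ 0) h0)" using cst[of "l-1"] l1 by simp
  then show ?thesis by simp
qed

lemma Ksh: "shh G (cs!0) = h0"
proof (cases D)
  case True
  then have "cs!0 = Dir h0" using cst[of 0] l1 by simp
  then show ?thesis by simp
next
  case False
  then have "cs!0 = Inv ((sig G ^^ (l-1)) h0)" using cst[of 0] l1 by simp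
  then have "shh G (cs!0) = sig G ((sig G ^^ (l-1)) h0)" by simp
  also have "\<dots> = (sig G ^^ l) h0" using l1
    by (metis Suc_diff_1 funpow.simps(2) o_apply less_le_trans zero_less_one)
  finally show ?thesis using perl by simp
qed

lemma run0: "run 0 (l-1)"
  unfolding run_def using l1 ln K1 by auto

lemma K5: "Nv G vS < Nv G vL"
proof -
  have "Suc (l-1) - 0 = l" using l1 by simp
  moreover have "vtx G (shh G (cs!0)) = vL" using Ksh h0v by simp
  moreover have "(if is_dir (cs!0) then shh G (cs!0) else thh G (cs!(l-1))) = h0" using Ksh Kth by simp
  ultimately show ?thesis using run_nz[OF run0] lNv h0o by simp
qed

lemma K6: "2 \<le> Nv G vL"
proof -
  have n0: "0 < n" using ln by linarith
  have "is_arrow G (arr (cs!0))" using str_arrow[OF n0] .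
  moreover have "vtx G (arr (cs!0)) = vL" using sh_vtx[OF str_H[OF n0]] Ksh h0v by simp
  ultimately show ?thesis unfolding is_arrow_def by simp
qed

lemma K4: "is_dir (cs!l) \<noteq> D"
proof
  assume d: "is_dir (cs!l) = D"
  have "run 0 l" unfolding run_def
  proof (intro conjI allI impI)
    show "0 \<le> l" "l < n" using ln by auto
    fix j assume "0 \<le> j \<and> j \<le> l"
    then show "is_dir (cs!j) = is_dir (cs!0)" using K1[of j] K1[of 0] d l1 by (cases "j = l") auto
  qed
  then have "Suc l - 0 < Nv G (vtx G (shh G (cs!0))) \<or> Suc l - 0 = Nv G (vtx G (shh G (cs!0)))"
    using run_nz by blast
  then show False using Ksh h0v lNv by simp
qed

abbreviation "g0 \<equiv> ohe G h0"

lemma g0: "g0 \<in> H G" "edg G g0 = i" "vtx G g0 = vS" "ohe G g0 = h0"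
  using oheH[OF h0H] ohe_edg[OF h0H] h0e h0o ohe_ohe[OF h0H] by auto

lemma Kl: "shh G (cs!l) = g0"
proof -
  have "Suc (l-1) = l" using l1 by simp
  then have "shh G (cs!Suc (l-1)) = ohe G (thh G (cs!(l-1)))"
    using diff_dir[of "l-1"] ln K4 K1[of "l-1"] l1 by simp
  then show ?thesis using Kth \<open>Suc (l-1) = l\<close> by simp
qed

lemma half_i: "h \<in> H G \<Longrightarrow> edg G h = i \<Longrightarrow> vtx G h = vS \<Longrightarrow> h = g0"
  using ohe_cases[OF h0H, of h] h0e h0v SL by auto

definition good :: "nat \<Rightarrow> bool" where
  "good a \<longleftrightarrow> vtx G (shh G (cs!a)) \<in> CV \<and> 2 \<le> Nv G (vtx G (ohe G (shh G (cs!a)))) \<and>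
     ((vtx G (shh G (cs!a)) = vS \<and> edg G (shh G (cs!a)) = i) \<or>
      (vtx G (shh G (cs!a)) \<noteq> vS \<and> edg G (shh G (cs!a)) \<in> CE \<and>
        dd (vtx G (ohe G (shh G (cs!a)))) + 1 = dd (vtx G (shh G (cs!a)))))"

lemma ne_s: assumes r: "run a k" and g: "good a" shows "thh G (cs!k) \<noteq> shh G (cs!a)"
proof
  assume eq: "thh G (cs!k) = shh G (cs!a)"
  define s where "s = shh G (cs!a)"
  define x where "x = vtx G s"
  define y where "y = vtx G (ohe G s)"
  have ak: "a \<le> k" "k < n" using r unfolding run_def by auto
  have sH: "s \<in> H G" unfolding s_def using sh_H str_H ak by simp
  have pw: "(sig G ^^ (Suc k - a)) s = s" using run_props(2)[OF r eq] unfolding s_def .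
  have vx: "val G x \<le> Suc k - a" unfolding x_def using orbit_le[OF sH _ pw] ak by simp
  have xC: "x \<in> CV" using g unfolding good_def s_def x_def by blast
  have Nx: "Nv G x = val G x" using Nv_CV[OF xC] .
  have hd: "(if is_dir (cs!a) then shh G (cs!a) else thh G (cs!k)) = s" using eq s_def by simp
  have "Suc k - a < Nv G x \<or> (Suc k - a = Nv G x \<and> Nv G y < Nv G x)"
    using run_nz[OF r] hd unfolding x_def y_def s_def by simp
  then have yx: "Nv G y < Nv G x" using vx Nx by auto
  have gd: "(x = vS \<and> edg G s = i) \<or> (x \<noteq> vS \<and> edg G s \<in> CE \<and> dd y + 1 = dd x)"
    using g unfolding good_def s_def x_def y_def by blast
  show False
  proof (cases "x = vS \<and> edg G s = i")
    case True
    then have "s = g0" using half_i[OF sH] x_def by simp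
    then have "y = vL" unfolding y_def using g0(4) h0v by simp
    then show False using yx True K5 by simp
  next
    case False
    then have B: "edg G s \<in> CE" "dd y + 1 = dd x" using gd by auto
    have y2: "2 \<le> Nv G y" using g unfolding good_def s_def y_def by blast
    have "is_arrow G (arr (cs!a))" using str_arrow ak by simp
    then have x2: "2 \<le> Nv G x" unfolding is_arrow_def x_def s_def using sh_vtx[OF str_H] ak by simp
    have en: "ends G (edg G s) = {y, x}" using ends_edg[OF sH] unfolding x_def y_def by (simp add: insert_commute)
    have "ends G (edg G s) \<subseteq> CV" using CE_E[OF B(1)] by blast
    then have yC: "y \<in> CV" using en by simp
    have "grd G y < grd G x" using grd_big[OF y2] grd_big[OF x2] yx by simp
    then show False using NC2[OF yC xC B(1) en B(2)] by blast
  qed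
qed

lemma tgt_ne: assumes r: "run a k" and g: "good a" shows "ltgt G (cs!k) \<noteq> i"
proof
  assume e: "ltgt G (cs!k) = i"
  define t where "t = thh G (cs!k)"
  define s where "s = shh G (cs!a)"
  have ak: "a \<le> k" "k < n" using r unfolding run_def by auto
  have tH: "t \<in> H G" unfolding t_def using th_H str_H ak by simp
  have sH: "s \<in> H G" unfolding s_def using sh_H str_H ak by simp
  have et: "edg G t = i" using e ltgt_th t_def by metis
  have vt: "vtx G t = vtx G s" using run_props(1)[OF r] t_def s_def by simp
  have "vtx G t \<in> ends G i" using ends_edg[OF tH] et by auto
  then have xx: "vtx G s = vS \<or> vtx G s = vL" using ends_i vt by simp
  have gd: "(vtx G s = vS \<and> edg G s = i) \<or> (vtx G s \<noteq> vS \<and> edg G s \<in> CE)"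
    using g unfolding good_def s_def by blast
  have xC: "vtx G s \<in> CV" using g unfolding good_def s_def by blast
  show False
  proof (cases "vtx G s = vS \<and> edg G s = i")
    case True
    then have "s = g0" using half_i[OF sH] by simp
    moreover have "t = g0" using half_i[OF tH et] vt True by simp
    ultimately show False using ne_s[OF r g] t_def s_def by simp
  next
    case False
    then have "vtx G s = vL" using gd xx by auto
    then show False using xC vL_notin by simp
  qed
qed

lemma inv_l: "run l l \<and> good l"
proof
  show "run l l" unfolding run_def using ln by auto
  show "good l" unfolding good_def using Kl g0 vS_CV K6 h0v by simp
qed

lemma inv_step: assumes r: "run a k" and g: "good a" and k: "Suc k < n"
  shows "\<exists>a'. run a' (Suc k) \<and> good a'"
proof (cases "is_dir (cs!Suc k) = is_dir (cs!k)")
  case True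
  have "run a (Suc k)" unfolding run_def
  proof (intro conjI allI impI)
    show "a \<le> Suc k" "Suc k < n" using r k unfolding run_def by auto
    fix j assume j: "a \<le> j \<and> j \<le> Suc k"
    show "is_dir (cs!j) = is_dir (cs!a)"
    proof (cases "j = Suc k")
      case True
      have "a \<le> k" "k \<le> k" using r unfolding run_def by auto
      then show ?thesis using True \<open>is_dir (cs!Suc k) = is_dir (cs!k)\<close> run_dir[OF r, of k] by simp
    next
      case False
      then show ?thesis using run_dir[OF r, of j] j by simp
    qed
  qed
  then show ?thesis using g by blast
next
  case False
  define t where "t = thh G (cs!k)"
  define s where "s = shh G (cs!a)"
  define x where "x = vtx G s"
  define y where "y = vtx G (ohe G s)"
  define x' where "x' = vtx G (ohe G t)"
  have ak: "a \<le> k" "k < n" using r unfolding run_def by auto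
  have tH: "t \<in> H G" unfolding t_def using th_H str_H ak by simp
  have sH: "s \<in> H G" unfolding s_def using sh_H str_H ak by simp
  have s': "shh G (cs!Suc k) = ohe G t" using diff_dir[OF k] False t_def by simp
  have vt: "vtx G t = x" using run_props(1)[OF r] t_def s_def x_def by simp
  have xC: "x \<in> CV" using g unfolding good_def s_def x_def by blast
  have "is_arrow G (arr (cs!k))" using str_arrow ak by simp
  then have x2: "2 \<le> Nv G x" unfolding is_arrow_def using th_vtx[OF str_H] ak vt t_def by simp
  have ei: "edg G t \<noteq> i" using tgt_ne[OF r g] ltgt_th t_def by metis
  have eE: "edg G t \<in> E G" using edgE[OF tH] .
  have en: "ends G (edg G t) = {x, x'}" using ends_edg[OF tH] vt x'_def by simp
  have st: "x' \<in> CV \<and> edg G t \<in> CE" using comp_step[OF xC eE ei en] .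
  have xx': "x \<noteq> x'" using noloop[OF conjunct2[OF st] en] .
  have ne: "t \<noteq> s" using ne_s[OF r g] t_def s_def by simp
  have adj: "dd x' \<le> dd x + 1" using dist_adj[OF eE _ CV_V[OF xC], of x'] en by (simp add: insert_commute)
  have gd: "(x = vS \<and> edg G s = i) \<or> (x \<noteq> vS \<and> edg G s \<in> CE \<and> dd y + 1 = dd x)"
    using g unfolding good_def s_def x_def y_def by blast
  have dx': "dd x + 1 = dd x'"
  proof (cases "x = vS \<and> edg G s = i")
    case True
    have "x' \<noteq> vS" using xx' True by simp
    then have "dd x' \<noteq> 0" using dist0 CV_V[OF conjunct1[OF st]] by blast
    then show ?thesis using adj True dist_self by simp
  next
    case F2: False
    then have B: "x \<noteq> vS" "edg G s \<in> CE" "dd y + 1 = dd x" using gd by auto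
    have ens: "ends G (edg G s) = {x, y}" using ends_edg[OF sH] x_def y_def by simp
    have "\<not> dd x' \<le> dd x"
    proof
      assume le: "dd x' \<le> dd x"
      have "edg G s = edg G t" using tree_unique[OF xC B(2) ens conjunct2[OF st] en _ le] B(3) by simp
      then have "t = s \<or> t = ohe G s" using ohe_cases[OF sH tH] by simp
      then have "t = ohe G s" using ne by simp
      then have "x = y" using vt y_def by simp
      then show False using B(3) by simp
    qed
    then show ?thesis using adj by simp
  qed
  have "good (Suc k)" unfolding good_def s'
  proof -
    have o: "ohe G (ohe G t) = t" using ohe_ohe[OF tH] .
    have "vtx G (ohe G t) \<noteq> vS" using dx' dist_self x'_def by auto
    moreover have "edg G (ohe G t) \<in> CE" using st ohe_edg[OF tH] by simp
    ultimately show "vtx G (ohe G t) \<in> CV \<and> 2 \<le> Nv G (vtx G (ohe G (ohe G t))) \<and>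
      (vtx G (ohe G t) = vS \<and> edg G (ohe G t) = i \<or>
       vtx G (ohe G t) \<noteq> vS \<and> edg G (ohe G t) \<in> CE \<and>
       dd (vtx G (ohe G (ohe G t))) + 1 = dd (vtx G (ohe G t)))"
      using st x'_def o vt x2 dx' by simp
  qed
  moreover have "run (Suc k) (Suc k)" unfolding run_def
  proof (intro conjI allI impI)
    show "Suc k \<le> Suc k" "Suc k < n" using k by auto
    fix j assume "Suc k \<le> j \<and> j \<le> Suc k"
    then have "j = Suc k" by simp
    then show "is_dir (cs!j) = is_dir (cs!Suc k)" by simp
  qed
  ultimately show ?thesis by blast
qed

lemma all_inv: "l + d < n \<Longrightarrow> \<exists>a. run a (l + d) \<and> good a"
proof (induction d)
  case 0 then show ?case using inv_l by auto
next
  case (Suc d)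
  then obtain a where "run a (l + d)" "good a" by auto
  then show ?case using inv_step[of a "l + d"] Suc.prems by auto
qed

lemma contra: False
proof -
  have "l + (n - 1 - l) < n" using ln by simp
  then obtain a where r: "run a (n - 1)" and g: "good a" using all_inv[of "n - 1 - l"] ln by auto
  have "cs \<noteq> []" using ln by auto
  then have "last cs = cs!(n-1)" by (simp add: last_conv_nth)
  then show False using tgt_ne[OF r g] tgt by simp
qed

end

context mc
begin
lemma contra_mc: False
proof -
  obtain h0 D where h: "h0 \<in> H G \<and> edg G h0 = i \<and> vtx G h0 = vL \<and> vtx G (ohe G h0) = vS \<and> l = Nv G vL \<and>
   (\<forall>t<l. cs!t = (if D then Dir ((sig G ^^ t) h0) else Inv ((sig G ^^ (l - 1 - t)) h0)))"
    using init by blast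
  interpret mc2 G i vS vL cs l h0 D
    by unfold_locales (use h in auto)
  show False by (rule contra)
qed
end


theorem mainTheorem19:
  fixes G :: "('v,'e,'h) bgraph" and cs :: "'h letter list" and l :: nat
    and i :: 'e and vS vL :: 'v
  assumes "brauer_graph G"
    and "is_string G cs"
    and "l < length cs"
    and "lsrc G (hd cs) = i" and "ltgt G (last cs) = i"
    and "(\<exists>p\<in>Pset G. take l cs = map Dir p) \<or> (\<exists>p\<in>Pset G. take l cs = map Inv (rev p))"
    and "i \<in> E G" and "ends G i = {vS, vL}" and "grd G vS < grd G vL"
    and "(compV G i vS, compE G i vS) \<noteq> (compV G i vL, compE G i vL)"
    and "is_tree G (compV G i vS) (compE G i vS)"
  shows "(\<exists>v\<in>compV G i vS. mult G v \<ge> 2) \<or>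
         (\<exists>v\<in>compV G i vS. \<exists>w\<in>compV G i vS.
             (\<exists>e\<in>compE G i vS. ends G e = {v, w}) \<and>
             dist G v vS + 1 = dist G w vS \<and> grd G v < grd G w)"
proof (rule ccontr)
  assume nc: "\<not> ((\<exists>v\<in>compV G i vS. mult G v \<ge> 2) \<or>
         (\<exists>v\<in>compV G i vS. \<exists>w\<in>compV G i vS.
             (\<exists>e\<in>compE G i vS. ends G e = {v, w}) \<and>
             dist G v vS + 1 = dist G w vS \<and> grd G v < grd G w))"
  have NC1: "\<And>v. v \<in> compV G i vS \<Longrightarrow> mult G v < 2" using nc by (meson not_le)
  have NC2: "\<And>v w e. v \<in> compV G i vS \<Longrightarrow> w \<in> compV G i vS \<Longrightarrow> e \<in> compE G i vS \<Longrightarrow>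
      ends G e = {v,w} \<Longrightarrow> dist G v vS + 1 = dist G w vS \<Longrightarrow> grd G v < grd G w \<Longrightarrow> False"
    using nc by blast
  have SL: "vS \<noteq> vL" using assms(9) by auto
  interpret mc G i vS vL cs l
    by unfold_locales (fact assms(1) assms(2) assms(3) assms(4) assms(5) assms(6) assms(7) assms(8)
        assms(9) assms(10) assms(11) SL NC1 NC2)+
  show False by (rule contra_mc)
qed

end
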